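(* Let $\Phi(z)=\frac{2z}{1+|z|^2}$. For $(\omega,s)\in\mathbb S^1\times(-1,1)$, let $\alpha\in(-\pi/2,\pi/2)$ and $\beta\in\mathbb S^1$ be determined by $\cos\alpha=\frac{1-s^2}{1+s^2}$, $\sin\alpha=\frac{-2s}{1+s^2}$, $\omega+\frac\pi2=\beta+\alpha+\pi$, and let $u(t)=\frac{1-s^2}{1+s^2}\tanh t$. Then $$\Phi(\gamma^{\mathrm v}_{\omega,s}(t))=\gamma^E_{\beta,\alpha}(u(t)),\quad t\in\mathbb R,\qquad\text{and}\qquad\frac{du}{dt}=\frac{1+s^2}{1-s^2}\,x^2(\gamma^{\mathrm v}_{\omega,s}(t)).$$ Moreover, in horocyclic coordinates, for $(\beta,a)\in\mathbb S^1\times\mathbb R$ and $t_0=-\log\sqrt{1+a^2}$, $$\Phi(\gamma_{\beta,a}(t+t_0))=\gamma^E_{\beta,\tan^{-1}a}\big(u(t)\big),\qquad u(t)=(1+a^2)^{-1/2}\tanh t.$$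
   Context: $x(z)=\frac{1-|z|^2}{1+|z|^2}$. Vertex parameterization of hyperbolic geodesics (Poincaré metric $\frac{4|dz|^2}{(1-|z|^2)^2}$ on the open unit disk): $\gamma^{\mathrm v}_{\omega,s}(t)=e^{i\omega}\frac{s+i\tanh(t/2)}{1+is\tanh(t/2)}$. Horocyclic parameterization: $\gamma_{\beta,a}(t)=e^{i\beta}\frac{(2+ia)\tanh(t/2)+ia}{ia\tanh(t/2)-2+ia}$. Euclidean geodesics (lines) in fan-beam coordinates: $\gamma^E_{\beta,\alpha}(u)=e^{i(\beta+\alpha+\pi)}(u+i\sin\alpha)$, $u\in[-\cos\alpha,\cos\alpha]$. *)

theory Defs
  imports "HOL-Analysis.Analysis"
begin

definition xfun :: "complex \<Rightarrow> real" where
  "xfun z = (1 - (cmod z)^2) / (1 + (cmod z)^2)"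

definition Phi :: "complex \<Rightarrow> complex" where
  "Phi z = 2 * z / complex_of_real (1 + (cmod z)^2)"

definition gamma_v :: "real \<Rightarrow> real \<Rightarrow> real \<Rightarrow> complex" where
  "gamma_v \<omega> s t = cis \<omega> * (complex_of_real s + \<i> * complex_of_real (tanh (t/2)))
      / (1 + \<i> * complex_of_real s * complex_of_real (tanh (t/2)))"

definition gamma_h :: "real \<Rightarrow> real \<Rightarrow> real \<Rightarrow> complex" where
  "gamma_h \<beta> a t = cis \<beta> * ((2 + \<i> * complex_of_real a) * complex_of_real (tanh (t/2)) + \<i> * complex_of_real a)
      / (\<i> * complex_of_real a * complex_of_real (tanh (t/2)) - 2 + \<i> * complex_of_real a)"

definition gamma_E :: "real \<Rightarrow> real \<Rightarrow> real \<Rightarrow> complex" where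
  "gamma_E \<beta> \<alpha> u = cis (\<beta> + \<alpha> + pi) * (complex_of_real u + \<i> * complex_of_real (sin \<alpha>))"

end

theory Submission
  imports Defs
begin


lemma Phi_rot: "Phi (cis b * w) = cis b * Phi w"
  by (simp add: Phi_def norm_mult)

lemma Phi_quot:
  assumes "D \<noteq> 0"
  shows "Phi (N / D) = 2 * N * cnj D / complex_of_real ((cmod N)^2 + (cmod D)^2)"
proof -
  have d: "(cmod D)^2 \<noteq> 0" using assms by simp
  have dd: "D * cnj D = complex_of_real ((cmod D)^2)" by (metis complex_norm_square of_real_power)
  have "Phi (N/D) = 2 * (N/D) / complex_of_real (1 + (cmod N)^2/(cmod D)^2)"
    by (simp add: Phi_def norm_divide power_divide)
  also have "complex_of_real (1 + (cmod N)^2/(cmod D)^2) = complex_of_real ((cmod N)^2 + (cmod D)^2) / (D * cnj D)"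
    unfolding dd using d by (simp add: field_simps)
  also have "2 * (N/D) / (complex_of_real ((cmod N)^2 + (cmod D)^2) / (D * cnj D)) = 
     2 * N * cnj D / complex_of_real ((cmod N)^2 + (cmod D)^2)"
    using assms by (simp add: field_simps)
  finally show ?thesis .
qed

lemma tanh_exp: "tanh (x::real) = (exp (2*x) - 1) / (exp (2*x) + 1)"
proof -
  have e: "exp (- 2 * x) = inverse (exp (2*x))" by (metis exp_minus mult_minus_left)
  have p: "exp (2*x) > 0" by auto
  have "tanh x = (1 - inverse (exp (2*x))) / (1 + inverse (exp (2*x)))"
    by (simp only: tanh_real_altdef e)
  also have "... = (exp (2*x) - 1) / (exp (2*x) + 1)"
  proof -
    have "\<And>y::real. y > 0 \<Longrightarrow> (1 - inverse y) / (1 + inverse y) = (y - 1) / (y + 1)"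
    proof -
      fix y :: real assume y: "y > 0"
      have a: "1 - inverse y = (y - 1) / y" "1 + inverse y = (y + 1) / y" using y
        by (simp_all add: field_simps)
      show "(1 - inverse y) / (1 + inverse y) = (y - 1) / (y + 1)" unfolding a using y by simp
    qed
    then show ?thesis using p by blast
  qed
  finally show ?thesis .
qed


lemma core_v:
  fixes s \<tau> :: real
  shows "Phi ((complex_of_real s + \<i> * complex_of_real \<tau>) / (1 + \<i> * complex_of_real s * complex_of_real \<tau>))
    = complex_of_real (2 * s / (1 + s^2)) + \<i> * complex_of_real ((1 - s^2) / (1 + s^2) * (2 * \<tau> / (1 + \<tau>^2)))"
proof -
  have D: "1 + \<i> * complex_of_real s * complex_of_real \<tau> \<noteq> 0"
    by (simp add: complex_eq_iff)
  have p1: "1 + s^2 > 0" "1 + \<tau>^2 > 0" by (auto simp: add_pos_nonneg)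
  have n1: "(cmod (complex_of_real s + \<i> * complex_of_real \<tau>))^2 = s^2 + \<tau>^2"
    by (simp add: cmod_power2)
  have n2: "(cmod (1 + \<i> * complex_of_real s * complex_of_real \<tau>))^2 = 1 + s^2 * \<tau>^2"
    by (simp add: cmod_power2 power_mult_distrib)
  have e: "s^2 + \<tau>^2 + (1 + s^2 * \<tau>^2) = (1 + s^2) * (1 + \<tau>^2)" by algebra
  have m: "2 * (complex_of_real s + \<i> * complex_of_real \<tau>) * cnj (1 + \<i> * complex_of_real s * complex_of_real \<tau>)
     = complex_of_real (2 * (s + s * \<tau>^2)) + \<i> * complex_of_real (2 * \<tau> * (1 - s^2))"
    by (simp add: complex_eq_iff algebra_simps power2_eq_square)
  have c1: "2 * (s + s * \<tau>^2) / ((1 + s^2) * (1 + \<tau>^2)) = 2 * s / (1 + s^2)"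
    using p1 by (subst frac_eq_eq) (auto, algebra)
  have c2: "2 * \<tau> * (1 - s^2) / ((1 + s^2) * (1 + \<tau>^2)) = (1 - s^2) / (1 + s^2) * (2 * \<tau> / (1 + \<tau>^2))"
    using p1 by (simp add: field_simps)
  show ?thesis unfolding Phi_quot[OF D] n1 n2 e m
    by (simp add: complex_eq_iff c1[symmetric] c2[symmetric])
qed


lemma tanh_double: "tanh (t::real) = 2 * tanh (t/2) / (1 + (tanh (t/2))^2)"
proof -
  have "tanh t = tanh (t/2 + t/2)" by simp
  also have "... = 2 * tanh (t/2) / (1 + (tanh (t/2))^2)"
    by (subst tanh_add) (auto simp: power2_eq_square)
  finally show ?thesis .
qed

lemma gamma_v_rot: "gamma_v \<omega> s t = cis \<omega> * ((complex_of_real s + \<i> * complex_of_real (tanh (t/2))) / (1 + \<i> * complex_of_real s * complex_of_real (tanh (t/2))))"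
  unfolding gamma_v_def by simp

lemma part1:
  assumes "cos \<alpha> = (1 - s^2) / (1 + s^2)"
    and "sin \<alpha> = -2 * s / (1 + s^2)"
    and "cis (\<omega> + pi/2) = cis (\<beta> + \<alpha> + pi)"
  shows "Phi (gamma_v \<omega> s t) = gamma_E \<beta> \<alpha> ((1 - s^2) / (1 + s^2) * tanh t)"
proof -
  have "gamma_E \<beta> \<alpha> ((1 - s^2) / (1 + s^2) * tanh t) = cis \<omega> * (\<i> *
    (complex_of_real ((1 - s^2) / (1 + s^2) * tanh t) + \<i> * complex_of_real (sin \<alpha>)))"
    unfolding gamma_E_def assms(3)[symmetric] by (simp add: cis_mult[symmetric])
  also have "\<i> * (complex_of_real ((1 - s^2) / (1 + s^2) * tanh t) + \<i> * complex_of_real (sin \<alpha>))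
     = complex_of_real (2 * s / (1 + s^2)) + \<i> * complex_of_real ((1 - s^2) / (1 + s^2) * (2 * tanh (t/2) / (1 + (tanh (t/2))^2)))"
    unfolding tanh_double[of t, symmetric] assms(2) by (simp add: complex_eq_iff)
  finally show ?thesis unfolding gamma_v_rot Phi_rot core_v by simp
qed


lemma part2:
  assumes "-1 < s" "s < 1"
  shows "((\<lambda>t. (1 - s^2) / (1 + s^2) * tanh t) has_real_derivative
              ((1 + s^2) / (1 - s^2) * (xfun (gamma_v \<omega> s t))^2)) (at t)"
proof -
  define \<tau> where "\<tau> = tanh (t/2)"
  have s2: "s^2 < 1" using assms by (simp add: abs_square_less_1)
  have p1: "1 + s^2 > 0" "1 + \<tau>^2 > 0" by (auto simp: add_pos_nonneg)
  have D: "1 + \<i> * complex_of_real s * complex_of_real \<tau> \<noteq> 0"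
    by (simp add: complex_eq_iff)
  have n1: "(cmod (complex_of_real s + \<i> * complex_of_real \<tau>))^2 = s^2 + \<tau>^2"
    by (simp add: cmod_power2)
  have n2: "(cmod (1 + \<i> * complex_of_real s * complex_of_real \<tau>))^2 = 1 + s^2 * \<tau>^2"
    by (simp add: cmod_power2 power_mult_distrib)
  have n2p: "1 + s^2 * \<tau>^2 > 0" by (auto simp: add_pos_nonneg)
  have nm: "(cmod (gamma_v \<omega> s t))^2 = (s^2 + \<tau>^2) / (1 + s^2 * \<tau>^2)"
    unfolding gamma_v_rot \<tau>_def[symmetric] norm_mult norm_divide
    by (simp add: power_divide n1[symmetric] n2[symmetric])
  have x: "xfun (gamma_v \<omega> s t) = (1 - s^2) * (1 - \<tau>^2) / ((1 + s^2) * (1 + \<tau>^2))"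
  proof -
    have a: "1 - (s^2 + \<tau>^2) / (1 + s^2 * \<tau>^2) = (1 - s^2) * (1 - \<tau>^2) / (1 + s^2 * \<tau>^2)"
      using n2p by (simp add: field_simps)
    have b: "1 + (s^2 + \<tau>^2) / (1 + s^2 * \<tau>^2) = (1 + s^2) * (1 + \<tau>^2) / (1 + s^2 * \<tau>^2)"
      using n2p by (simp add: field_simps)
    show ?thesis unfolding xfun_def nm a b using n2p by simp
  qed
  have th: "tanh t = 2 * \<tau> / (1 + \<tau>^2)" unfolding \<tau>_def by (rule tanh_double)
  have "((\<lambda>t. (1 - s^2) / (1 + s^2) * tanh t) has_real_derivative
              ((1 - s^2) / (1 + s^2) * (1 - (tanh t)^2))) (at t)"
    using p1 by (auto intro!: derivative_eq_intros)
  moreover have "(1 - s^2) / (1 + s^2) * (1 - (tanh t)^2) = (1 + s^2) / (1 - s^2) * (xfun (gamma_v \<omega> s t))^2"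
  proof -
    define A where "A = (1 - s^2) / (1 + s^2)"
    define B where "B = (1 - \<tau>^2) / (1 + \<tau>^2)"
    have A0: "A \<noteq> 0" unfolding A_def using p1 s2 by simp
    have xa: "xfun (gamma_v \<omega> s t) = A * B" unfolding x A_def B_def by simp
    have g: "\<And>P. P > 0 \<Longrightarrow> 1 - (2*\<tau>/P)^2 = (P^2 - 4*\<tau>^2)/P^2"
      by (simp add: power_divide field_simps)
    have h: "(1 + \<tau>^2)^2 - 4*\<tau>^2 = (1 - \<tau>^2)^2" by algebra
    have tb: "1 - (tanh t)^2 = B^2" unfolding th B_def g[OF p1(2)] h by (simp add: power_divide)
    have ia: "(1 + s^2) / (1 - s^2) = 1 / A" unfolding A_def by simp
    show ?thesis unfolding xa tb ia A_def[symmetric] using A0 by (simp add: power2_eq_square)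
  qed
  ultimately show ?thesis by simp
qed


lemma cdiv: "(complex_of_real A + \<i> * complex_of_real B) / complex_of_real C = complex_of_real (A / C) + \<i> * complex_of_real (B / C)"
  by (simp add: complex_eq_iff)

lemma core_h:
  fixes a \<tau> :: real
  shows "Phi (((2 + \<i> * complex_of_real a) * complex_of_real \<tau> + \<i> * complex_of_real a) /
       (\<i> * complex_of_real a * complex_of_real \<tau> - 2 + \<i> * complex_of_real a))
    = complex_of_real ((a^2 * (1 + \<tau>)^2 - 4 * \<tau>) / (2 + 2 * \<tau>^2 + a^2 * (1 + \<tau>)^2))
      + \<i> * complex_of_real (- 2 * a * (1 + \<tau>)^2 / (2 + 2 * \<tau>^2 + a^2 * (1 + \<tau>)^2))"
proof -
  let ?N = "(2 + \<i> * complex_of_real a) * complex_of_real \<tau> + \<i> * complex_of_real a"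
  let ?D = "\<i> * complex_of_real a * complex_of_real \<tau> - 2 + \<i> * complex_of_real a"
  have D: "?D \<noteq> 0" by (simp add: complex_eq_iff)
  have N': "?N = complex_of_real (2 * \<tau>) + \<i> * complex_of_real (a * (1 + \<tau>))"
    by (simp add: complex_eq_iff algebra_simps)
  have D': "?D = complex_of_real (- 2) + \<i> * complex_of_real (a * (1 + \<tau>))"
    by (simp add: complex_eq_iff algebra_simps)
  have n1: "(cmod ?N)^2 = 4 * \<tau>^2 + a^2 * (1 + \<tau>)^2"
    unfolding N' by (simp add: cmod_power2 power_mult_distrib)
  have n2: "(cmod ?D)^2 = 4 + a^2 * (1 + \<tau>)^2"
    unfolding D' by (simp add: cmod_power2 power_mult_distrib)
  have e: "4 * \<tau>^2 + a^2 * (1 + \<tau>)^2 + (4 + a^2 * (1 + \<tau>)^2) = 2 * (2 + 2 * \<tau>^2 + a^2 * (1 + \<tau>)^2)"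
    by algebra
  have m: "2 * ?N * cnj ?D = complex_of_real (2 * (a^2 * (1 + \<tau>)^2 - 4 * \<tau>)) + \<i> * complex_of_real (2 * (- 2 * a * (1 + \<tau>)^2))"
    by (simp add: complex_eq_iff algebra_simps power2_eq_square)
  have Q: "2 + 2 * \<tau>^2 + a^2 * (1 + \<tau>)^2 > 0" by (auto simp: add_pos_nonneg)
  have c: "\<And>X Q::real. 2 * X / (2 * Q) = X / Q"
    by simp
  show ?thesis unfolding Phi_quot[OF D] n1 n2 e m cdiv c ..
qed

lemma part3:
  fixes b a t :: real
  shows "Phi (gamma_h b a (t + (- ln (sqrt (1 + a^2))))) =
              gamma_E b (arctan a) ((1 + a^2) powr (-1/2) * tanh t)"
proof -
  define r where "r = sqrt (1 + a^2)"
  define E where "E = exp t"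
  define \<tau> where "\<tau> = tanh ((t + (- ln r))/2)"
  define T where "T = tanh t"
  have r0: "r > 0" unfolding r_def by (simp add: add_pos_nonneg)
  have r2: "r^2 = 1 + a^2" unfolding r_def by (simp add: add_nonneg_nonneg)
  have E0: "E > 0" unfolding E_def by simp
  have ER: "E + r > 0" using r0 E0 by simp
  have E2: "E^2 + 1 > 0" using zero_le_power2[of E] by linarith
  have tau: "\<tau> = (E - r) / (E + r)"
  proof -
    have "\<tau> = (exp (t - ln r) - 1) / (exp (t - ln r) + 1)"
    proof -
      have "2 * ((t + - ln r) / 2) = t - ln r" by simp
      then show ?thesis unfolding \<tau>_def tanh_exp[of "(t + - ln r)/2"] by (simp only:)
    qed
    also have "exp (t - ln r) = E / r" unfolding E_def using r0 by (simp add: exp_diff)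
    also have "(E / r - 1) / (E / r + 1) = (E - r) / (E + r)"
    proof -
      have a: "E / r - 1 = (E - r) / r" "E / r + 1 = (E + r) / r" using r0 by (simp_all add: field_simps)
      show ?thesis unfolding a using r0 by simp
    qed
    finally show ?thesis .
  qed
  have Tdef: "T = (E^2 - 1) / (E^2 + 1)"
    unfolding T_def tanh_exp E_def by (simp add: exp_double[symmetric] power2_eq_square exp_add[symmetric])
  have pw: "(1 + a^2) powr (-1/2) = 1 / r"
  proof -
    have nn: "0 \<le> 1 + a^2" by (metis add_nonneg_nonneg zero_le_one zero_le_power2)
    have h: "(1 + a^2) powr (1/2) = r" unfolding r_def using nn by (rule powr_half_sqrt)
    have "(1 + a^2) powr (-1/2) = (1 + a^2) powr (- (1/2))" by simp
    also have "... = inverse ((1 + a^2) powr (1/2))" by (rule powr_minus)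
    finally show ?thesis unfolding h by (simp add: inverse_eq_divide)
  qed
  have rhs: "gamma_E b (arctan a) ((1 + a^2) powr (-1/2) * tanh t)
     = cis b * (complex_of_real ((a^2 - T) / r^2) + \<i> * complex_of_real (- a * (1 + T) / r^2))"
  proof -
    have c: "cis (b + arctan a + pi) = cis b * (- (complex_of_real (1/r) + \<i> * complex_of_real (a/r)))"
    proof -
      have cc: "\<And>x. cis x = complex_of_real (cos x) + \<i> * complex_of_real (sin x)"
        by (simp add: complex_eq_iff)
      have "cis (b + arctan a + pi) = cis b * cis (arctan a) * cis pi"
        by (simp only: cis_mult)
      also have "cis (arctan a) = complex_of_real (1/r) + \<i> * complex_of_real (a/r)"
        unfolding cc cos_arctan sin_arctan r_def ..
      finally show ?thesis by (simp add: algebra_simps)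
    qed
    show ?thesis unfolding gamma_E_def c pw T_def[symmetric] sin_arctan r_def[symmetric]
      using r0 by (simp add: complex_eq_iff field_simps power2_eq_square)
  qed
  have lhs: "gamma_h b a (t + (- ln (sqrt (1 + a^2)))) = cis b * (((2 + \<i> * complex_of_real a) * complex_of_real \<tau> + \<i> * complex_of_real a) /
       (\<i> * complex_of_real a * complex_of_real \<tau> - 2 + \<i> * complex_of_real a))"
    unfolding gamma_h_def \<tau>_def r_def by simp
  define K where "K = (E + r)^2"
  have K0: "K > 0" unfolding K_def using ER by simp
  have t1: "1 + \<tau> = 2 * E / (E + r)" unfolding tau using ER by (simp add: field_simps)
  have t1s: "(1 + \<tau>)^2 = 4 * E^2 / K" unfolding t1 K_def by (simp add: power_divide power_mult_distrib)
  have t2: "\<tau>^2 = (E - r)^2 / K" unfolding tau K_def by (simp add: power_divide)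
  have Qe: "2 + 2 * \<tau>^2 + a^2 * (1 + \<tau>)^2 = 4 * r^2 * (E^2 + 1) / K"
  proof -
    have "2 + 2 * \<tau>^2 + a^2 * (1 + \<tau>)^2 = (2 * K + 2 * (E - r)^2 + a^2 * (4 * E^2)) / K"
      unfolding t1s t2 using K0 by (simp add: field_simps)
    also have "2 * K + 2 * (E - r)^2 + a^2 * (4 * E^2) = 4 * r^2 * (E^2 + 1)"
      unfolding K_def using r2 by algebra
    finally show ?thesis .
  qed
  have Re: "a^2 * (1 + \<tau>)^2 - 4 * \<tau> = (4 * a^2 * E^2 - 4 * (E^2 - r^2)) / K"
  proof -
    have "4 * \<tau> = 4 * (E - r) * (E + r) / K" unfolding tau K_def using ER
      by (simp add: power2_eq_square)
    then have "a^2 * (1 + \<tau>)^2 - 4 * \<tau> = (a^2 * (4 * E^2) - 4 * (E - r) * (E + r)) / K"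
      unfolding t1s using K0 by (simp add: diff_divide_distrib)
    also have "a^2 * (4 * E^2) - 4 * (E - r) * (E + r) = 4 * a^2 * E^2 - 4 * (E^2 - r^2)" by algebra
    finally show ?thesis .
  qed
  have Im: "- 2 * a * (1 + \<tau>)^2 = - 8 * a * E^2 / K"
    unfolding t1s by simp
  have gK: "\<And>X Y Kk::real. Kk \<noteq> 0 \<Longrightarrow> X / Kk / (Y / Kk) = X / Y" by simp
  have nz1: "4 * r^2 * (E^2 + 1) \<noteq> 0" "r^2 \<noteq> 0" "(E^2 + 1) * r^2 \<noteq> 0" using r0 E2 by auto
  have c1: "(4 * a^2 * E^2 - 4 * (E^2 - r^2)) / K / (4 * r^2 * (E^2 + 1) / K) = (a^2 - T) / r^2"
  proof -
    have "(4 * a^2 * E^2 - 4 * (E^2 - r^2)) / K / (4 * r^2 * (E^2 + 1) / K) = (4 * a^2 * E^2 - 4 * (E^2 - r^2)) / (4 * r^2 * (E^2 + 1))"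
      using K0 by (intro gK) simp
    also have "... = (a^2 - T) / r^2"
    proof -
      have tT: "a^2 - T = (a^2 * (E^2+1) - (E^2 - 1)) / (E^2+1)" unfolding Tdef using E2 by (simp add: field_simps)
      show ?thesis unfolding tT divide_divide_eq_left frac_eq_eq[OF nz1(1) nz1(3)] using r2 by algebra
    qed
    finally show ?thesis .
  qed
  have c2: "- 8 * a * E^2 / K / (4 * r^2 * (E^2 + 1) / K) = - a * (1 + T) / r^2"
  proof -
    have "- 8 * a * E^2 / K / (4 * r^2 * (E^2 + 1) / K) = - 8 * a * E^2 / (4 * r^2 * (E^2 + 1))"
      using K0 by (intro gK) simp
    also have "... = - a * (1 + T) / r^2"
    proof -
      have tT: "- a * (1 + T) = (- a * (2 * E^2)) / (E^2+1)" unfolding Tdef using E2 by (simp add: field_simps)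
      show ?thesis unfolding tT divide_divide_eq_left frac_eq_eq[OF nz1(1) nz1(3)] by (simp add: algebra_simps)
    qed
    finally show ?thesis .
  qed
  show ?thesis unfolding lhs rhs Phi_rot core_h Qe Re Im c1 c2 ..
qed


theorem proposition3p11:
  fixes \<omega> s \<alpha> \<beta> :: real
  assumes "-1 < s" "s < 1"
    and "-(pi/2) < \<alpha>" "\<alpha> < pi/2"
    and "cos \<alpha> = (1 - s^2) / (1 + s^2)"
    and "sin \<alpha> = -2 * s / (1 + s^2)"
    and "cis (\<omega> + pi/2) = cis (\<beta> + \<alpha> + pi)"
  shows "(\<forall>t::real. Phi (gamma_v \<omega> s t) = gamma_E \<beta> \<alpha> ((1 - s^2) / (1 + s^2) * tanh t))
       \<and> (\<forall>t::real. ((\<lambda>t. (1 - s^2) / (1 + s^2) * tanh t) has_real_derivative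
              ((1 + s^2) / (1 - s^2) * (xfun (gamma_v \<omega> s t))^2)) (at t))
       \<and> (\<forall>(\<beta>'::real) (a::real). \<forall>t::real.
              Phi (gamma_h \<beta>' a (t + (- ln (sqrt (1 + a^2))))) =
              gamma_E \<beta>' (arctan a) ((1 + a^2) powr (-1/2) * tanh t))"
  using part1[OF assms(5,6,7)] part2[OF assms(1,2)] part3 by blast

end
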